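(* Let $Y\subset\mathbb C^n$ be a $k$-dimensional subspace with basis $b^i=(b^i_1,\dots,b^i_n)$, $i=1,\dots,k$, and $a\in(\mathbb C^\times)^n$; assume that for every $j$, $Y\not\subset\{q_j=0\}$ and $Y^\perp\not\subset\{p_j=0\}$. For a $k$-element subset $I$ such that $q_I$ is a coordinate system on $Y$, let $\mathrm{Jac}_I(q_I,p_{\bar I})$ be the Jacobian of the projection $\pi_{L_{Y,a}}:L_{Y,a}\to\mathbb C^n$ with respect to the ordered coordinates $(q_I,p_{\bar I})$ on $L_{Y,a}$ and $(q_1,\dots,q_n)$ on $\mathbb C^n$. Then the function $d_I^2\,\mathrm{Jac}_I$ on $L_{Y,a}$ does not depend on the choice of such $I$, and $$d_I^2\,\mathrm{Jac}_I=(-1)^{n-k}\sum_{M\subset\{1,\dots,n\},\,|M|=n-k}d_{\bar M}^2\prod_{j\in M}\frac{a_j}{p_j^2}.$$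
   Context: $\mathbb C^n$ has coordinates $q_1,\dots,q_n$, $(\mathbb C^n)^*$ has dual coordinates $p_1,\dots,p_n$; $Y^\perp$ is the annihilator of $Y$. $r_a(q,p)=(q_1+a_1/p_1,\dots,q_n+a_n/p_n,p)$ (defined where all $p_j\ne0$) and $L_{Y,a}=r_a(Y\times Y^\perp)$, the variety in $\mathbb C^n\times\{\prod p_j\ne0\}$ given by $\sum_j\alpha_jp_j=0$ ($\alpha\in Y$), $\sum_j\beta_j(q_j-a_j/p_j)=0$ ($\beta\in Y^\perp$); $\pi_{L_{Y,a}}$ is the restriction of the projection $\mathbb C^n\times(\mathbb C^n)^*\to\mathbb C^n$. For a $k$-subset $I$, $\bar I$ is its complement; when $q_I$ are coordinates on $Y$, $(q_I,p_{\bar I})$ are coordinates on $L_{Y,a}$, ordered by increasing index. For a $k$-subset $I=\{i_1<\dots<i_k\}$, $d_I=\det_{i,l=1}^k(b^i_{i_l})$. *)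

theory Defs
  imports "HOL-Analysis.Analysis"
begin

text \<open>Conventions: C^n is represented by functions nat => complex vanishing
outside the index range {0..<n} (paper index j corresponds to j-1 here).\<close>

definition cvec :: "nat \<Rightarrow> (nat \<Rightarrow> complex) set" where
  "cvec n = {v. \<forall>j\<ge>n. v j = 0}"

definition detn :: "nat \<Rightarrow> (nat \<Rightarrow> nat \<Rightarrow> complex) \<Rightarrow> complex" where
  "detn m A = (\<Sum>\<sigma> | \<sigma> permutes {..<m}. of_int (sign \<sigma>) * (\<Prod>i<m. A i (\<sigma> i)))"

definition Ysp :: "nat \<Rightarrow> nat \<Rightarrow> (nat \<Rightarrow> nat \<Rightarrow> complex) \<Rightarrow> (nat \<Rightarrow> complex) set" where
  "Ysp n k b = {y. \<exists>c. y = (\<lambda>j. \<Sum>i<k. c i * b i j)}"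

definition lin_indep :: "nat \<Rightarrow> (nat \<Rightarrow> nat \<Rightarrow> complex) \<Rightarrow> bool" where
  "lin_indep k b \<longleftrightarrow> (\<forall>c. (\<forall>j. (\<Sum>i<k. c i * b i j) = 0) \<longrightarrow> (\<forall>i<k. c i = 0))"

definition annih :: "nat \<Rightarrow> (nat \<Rightarrow> complex) set \<Rightarrow> (nat \<Rightarrow> complex) set" where
  "annih n Y = {p \<in> cvec n. \<forall>y\<in>Y. (\<Sum>j<n. p j * y j) = 0}"

definition r_map :: "(nat \<Rightarrow> complex) \<Rightarrow> (nat \<Rightarrow> complex) \<times> (nat \<Rightarrow> complex)
    \<Rightarrow> (nat \<Rightarrow> complex) \<times> (nat \<Rightarrow> complex)" where
  "r_map a z = ((\<lambda>j. fst z j + a j / snd z j), snd z)"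

definition Lset :: "nat \<Rightarrow> (nat \<Rightarrow> complex) set \<Rightarrow> (nat \<Rightarrow> complex)
    \<Rightarrow> ((nat \<Rightarrow> complex) \<times> (nat \<Rightarrow> complex)) set" where
  "Lset n Y a = r_map a ` {(y, p). y \<in> Y \<and> p \<in> annih n Y \<and> (\<forall>j<n. p j \<noteq> 0)}"

definition coord_sys :: "nat set \<Rightarrow> (nat \<Rightarrow> complex) set \<Rightarrow> bool" where
  "coord_sys I Y \<longleftrightarrow> bij_betw (\<lambda>y j. if j \<in> I then y j else 0) Y {v. \<forall>j. j \<notin> I \<longrightarrow> v j = 0}"

text \<open>The coordinates (q_I, p_{bar I}) on L, ordered by increasing index:
the j-th coordinate is q_j if j is in I and p_j otherwise.\<close>
definition chart :: "nat set \<Rightarrow> (nat \<Rightarrow> complex) \<times> (nat \<Rightarrow> complex) \<Rightarrow> (nat \<Rightarrow> complex)" where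
  "chart I z = (\<lambda>j. if j \<in> I then fst z j else snd z j)"

definition Jac :: "nat \<Rightarrow> (nat \<Rightarrow> complex) set \<Rightarrow> (nat \<Rightarrow> complex) \<Rightarrow> nat set
    \<Rightarrow> (nat \<Rightarrow> complex) \<times> (nat \<Rightarrow> complex) \<Rightarrow> complex" where
  "Jac n Y a I z =
     (let x = chart I z; inv_ch = inv_into (Lset n Y a) (chart I)
      in detn n (\<lambda>i j. deriv (\<lambda>t. fst (inv_ch (x(j := t))) i) (x j)))"

definition dI :: "nat \<Rightarrow> (nat \<Rightarrow> nat \<Rightarrow> complex) \<Rightarrow> nat set \<Rightarrow> complex" where
  "dI k b I = detn k (\<lambda>i l. b i (sorted_list_of_set I ! l))"

end

theory Submission
  imports Defs "Jordan_Normal_Form.Determinant"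
begin

lemma detn_cong:
  assumes "\<And>i j. i < m \<Longrightarrow> j < m \<Longrightarrow> F i j = G i j"
  shows "detn m F = detn m G"
  unfolding detn_def
proof (rule sum.cong[OF refl])
  fix \<sigma> assume "\<sigma> \<in> {\<sigma>. \<sigma> permutes {..<m}}"
  hence p: "\<sigma> permutes {..<m}" by simp
  show "of_int (sign \<sigma>) * (\<Prod>i<m. F i (\<sigma> i)) = of_int (sign \<sigma>) * (\<Prod>i<m. G i (\<sigma> i))"
    using assms permutes_in_image[OF p] by (auto intro!: prod.cong)
qed

lemma detn_det: "detn m F = Determinant.det (mat m m (\<lambda>(i,j). F i j))"
proof -
  have "Determinant.det (mat m m (\<lambda>(i,j). F i j)) =
    (\<Sum>\<sigma> | \<sigma> permutes {..<m}. of_int (sign \<sigma>) * (\<Prod>i<m. mat m m (\<lambda>(i,j). F i j) $$ (i, \<sigma> i)))"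
    by (simp add: Determinant.det_def atLeast0LessThan)
  also have "\<dots> = detn m F" unfolding detn_def
  proof (rule sum.cong[OF refl])
    fix \<sigma> assume "\<sigma> \<in> {\<sigma>. \<sigma> permutes {..<m}}"
    hence p: "\<sigma> permutes {..<m}" by simp
    show "of_int (sign \<sigma>) * (\<Prod>i<m. mat m m (\<lambda>(i,j). F i j) $$ (i, \<sigma> i)) = of_int (sign \<sigma>) * (\<Prod>i<m. F i (\<sigma> i))"
      using permutes_in_image[OF p] by (auto intro!: prod.cong)
  qed
  finally show ?thesis by simp
qed

lemma detn_transpose: "detn m (\<lambda>i j. F j i) = detn m F"
proof -
  have "mat m m (\<lambda>(i,j). F j i) = transpose_mat (mat m m (\<lambda>(i,j). F i j))"
    by (rule eq_matI) auto
  thus ?thesis unfolding detn_det by (simp add: det_transpose[of _ m])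
qed

lemma detn_rows_eq:
  assumes "i < m" "j < m" "i \<noteq> j" "\<And>l. l < m \<Longrightarrow> F i l = F j l"
  shows "detn m F = 0"
  unfolding detn_det
  by (rule det_identical_rows[of _ m i j]) (use assms in \<open>auto intro!: eq_vecI\<close>)

lemma detn_perm_rows:
  assumes "\<tau> permutes {..<m}"
  shows "detn m (\<lambda>i j. F (\<tau> i) j) = of_int (sign \<tau>) * detn m F"
proof -
  have p: "\<tau> permutes {0..<m}" using assms by (simp add: atLeast0LessThan)
  have "mat m m (\<lambda>(i,j). F (\<tau> i) j) = mat m m (\<lambda>(i,j). mat m m (\<lambda>(i,j). F i j) $$ (\<tau> i, j))"
    using permutes_in_image[OF assms] by (intro eq_matI) auto
  thus ?thesis unfolding detn_det using det_permute_rows[OF _ p, of "mat m m (\<lambda>(i,j). F i j)"]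
    by simp
qed

lemma detn_scale_cols:
  "detn m (\<lambda>i j. F i j * c j) = (\<Prod>j<m. c j) * detn m F"
  unfolding detn_def sum_distrib_left
proof (rule sum.cong[OF refl])
  fix \<sigma> assume "\<sigma> \<in> {\<sigma>. \<sigma> permutes {..<m}}"
  hence p: "\<sigma> permutes {..<m}" by simp
  have "(\<Prod>i<m. c (\<sigma> i)) = (\<Prod>j<m. c j)"
    using prod.permute[OF p, of c] by (simp add: comp_def)
  thus "of_int (sign \<sigma>) * (\<Prod>i<m. F i (\<sigma> i) * c (\<sigma> i)) = (\<Prod>j<m. c j) * (of_int (sign \<sigma>) * (\<Prod>i<m. F i (\<sigma> i)))"
    by (simp add: prod.distrib)
qed

lemma detn_neg: "detn m (\<lambda>i j. - F i j) = (-1) ^ m * detn m F"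
  using detn_scale_cols[of m F "\<lambda>_. -1"] by simp

lemma detn_unit_row:
  assumes "i0 < m" "j0 < m" "\<And>j. j < m \<Longrightarrow> F i0 j = (if j = j0 then 1 else 0)"
  shows "detn m F = (-1) ^ (i0 + j0) * detn (m - 1) (\<lambda>a b. F (insert_index i0 a) (insert_index j0 b))"
proof -
  let ?A = "mat m m (\<lambda>(i,j). F i j)"
  have A: "?A \<in> carrier_mat m m" by simp
  have "Determinant.det ?A = (\<Sum>j<m. ?A $$ (i0,j) * cofactor ?A i0 j)"
    by (rule laplace_expansion_row[OF A assms(1)])
  also have "\<dots> = (\<Sum>j<m. if j = j0 then cofactor ?A i0 j0 else 0)"
    by (rule sum.cong) (use assms in auto)
  also have "\<dots> = cofactor ?A i0 j0" using assms(2) by simp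
  also have "mat_delete ?A i0 j0 = mat (m - 1) (m - 1) (\<lambda>(a,b). F (insert_index i0 a) (insert_index j0 b))"
    unfolding mat_delete_def insert_index_def using assms(1,2)
    by (intro eq_matI) auto
  hence "cofactor ?A i0 j0 = (-1) ^ (i0 + j0) * detn (m - 1) (\<lambda>a b. F (insert_index i0 a) (insert_index j0 b))"
    unfolding detn_det cofactor_def by simp
  finally show ?thesis unfolding detn_det by simp
qed


definition en :: "nat set \<Rightarrow> nat \<Rightarrow> nat" where
  "en R i = sorted_list_of_set R ! i"

definition mdet :: "nat set \<Rightarrow> nat set \<Rightarrow> (nat \<Rightarrow> nat \<Rightarrow> complex) \<Rightarrow> complex" where
  "mdet R T A = detn (card R) (\<lambda>i j. A (en R i) (en T j))"

lemma en_bij: "finite R \<Longrightarrow> bij_betw (en R) {..<card R} R"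
  unfolding en_def[abs_def]
  by (rule bij_betw_nth) auto

lemma en_in: "finite R \<Longrightarrow> i < card R \<Longrightarrow> en R i \<in> R"
  using bij_betwE[OF en_bij[of R]] by blast

lemma en_inj: "finite R \<Longrightarrow> i < card R \<Longrightarrow> j < card R \<Longrightarrow> en R i = en R j \<Longrightarrow> i = j"
proof -
  assume R: "finite R" and ij: "i < card R" "j < card R" "en R i = en R j"
  have "inj_on (en R) {..<card R}" using en_bij[OF R] unfolding bij_betw_def by simp
  thus ?thesis using ij unfolding inj_on_def by blast
qed

lemma en_mono: "finite R \<Longrightarrow> i < j \<Longrightarrow> j < card R \<Longrightarrow> en R i < en R j"
proof -
  have "sorted_wrt (<) (sorted_list_of_set R)" by (rule strict_sorted_list_of_set)
  hence "\<forall>i j. i < j \<longrightarrow> j < length (sorted_list_of_set R) \<longrightarrow> sorted_list_of_set R ! i < sorted_list_of_set R ! j"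
    by (simp only: sorted_wrt_iff_nth_less)
  moreover assume "finite R" "i < j" "j < card R"
  ultimately show ?thesis unfolding en_def by simp
qed

lemma en_lessThan: "i < m \<Longrightarrow> en {..<m} i = i"
  unfolding en_def by (simp add: lessThan_atLeast0)

lemma en_surj: "finite R \<Longrightarrow> r \<in> R \<Longrightarrow> \<exists>p<card R. en R p = r"
proof -
  assume R: "finite R" and r: "r \<in> R"
  have "en R ` {..<card R} = R" using en_bij[OF R] unfolding bij_betw_def by simp
  hence "r \<in> en R ` {..<card R}" using r by simp
  then obtain p where "p \<in> {..<card R}" "r = en R p" by (rule imageE)
  thus ?thesis by auto
qed

lemma en_remove:
  assumes R: "finite R" and p: "p < card R" and a: "a < card R - 1"
  shows "en (R - {en R p}) a = en R (insert_index p a)"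
proof -
  let ?l = "map (\<lambda>a. en R (insert_index p a)) [0..<card R - 1]"
  have ii: "insert_index p ` {..<card R - 1} = {..<card R} - {p}"
    using insert_index_image[of p "card R - 1"] p by (simp add: atLeast0LessThan)
  have "sorted_wrt (<) ?l"
    unfolding sorted_wrt_iff_nth_less
    by (auto intro!: en_mono[OF R] simp: insert_index_def)
  moreover have "set ?l = R - {en R p}"
  proof -
    have "set ?l = en R ` (insert_index p ` {..<card R - 1})" by (simp add: image_image atLeast0LessThan)
    also have "\<dots> = en R ` ({..<card R} - {p})" by (simp only: ii)
    also have "\<dots> = en R ` {..<card R} - en R ` {p}"
      using en_bij[OF R] p by (intro inj_on_image_set_diff) (auto simp: bij_betw_def)
    also have "\<dots> = R - {en R p}" using en_bij[OF R] by (simp add: bij_betw_def)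
    finally show ?thesis .
  qed
  moreover have "length ?l = card (R - {en R p})"
    using en_in[OF R p] R by simp
  ultimately have "sorted_list_of_set (R - {en R p}) = ?l"
    using sorted_list_of_set_unique[of "R - {en R p}"] R by blast
  thus ?thesis unfolding en_def using a by simp
qed

lemma mdet_unit_row:
  assumes R: "finite R" and T: "finite T" and c: "card R = card T"
    and r: "r \<in> R" "r \<in> T"
    and u: "\<And>t. t \<in> T \<Longrightarrow> A r t = (if t = r then 1 else 0)"
  shows "\<exists>pR pT. mdet R T A = (-1) ^ (pR + pT) * mdet (R - {r}) (T - {r}) A \<and> (R = T \<longrightarrow> pR = pT)"
proof -
  define pR where "pR = (SOME p. p < card R \<and> en R p = r)"
  define pT where "pT = (SOME p. p < card T \<and> en T p = r)"
  have pR: "pR < card R \<and> en R pR = r" unfolding pR_def by (rule someI_ex) (rule en_surj[OF R r(1)])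
  have pT: "pT < card T \<and> en T pT = r" unfolding pT_def by (rule someI_ex) (rule en_surj[OF T r(2)])
  have "mdet R T A = (-1) ^ (pR + pT) * detn (card R - 1) (\<lambda>a b. A (en R (insert_index pR a)) (en T (insert_index pT b)))"
    unfolding mdet_def
  proof (rule detn_unit_row)
    show "pR < card R" using pR by simp
    show "pT < card R" using pT c by simp
    fix j assume j: "j < card R"
    have "en T j = r \<longleftrightarrow> j = pT" using pT en_inj[OF T, of j pT] j c by auto
    thus "A (en R pR) (en T j) = (if j = pT then 1 else 0)"
      using pR u[of "en T j"] en_in[OF T, of j] j c by auto
  qed
  also have "detn (card R - 1) (\<lambda>a b. A (en R (insert_index pR a)) (en T (insert_index pT b)))
      = mdet (R - {r}) (T - {r}) A"
    unfolding mdet_def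
  proof -
    have cr: "card (R - {r}) = card R - 1" using R r by simp
    show "detn (card R - 1) (\<lambda>a b. A (en R (insert_index pR a)) (en T (insert_index pT b))) =
      detn (card (R - {r})) (\<lambda>i j. A (en (R - {r}) i) (en (T - {r}) j))"
      unfolding cr
    proof (rule detn_cong)
      fix i j assume i: "i < card R - 1" and j: "j < card R - 1"
      show "A (en R (insert_index pR i)) (en T (insert_index pT j)) = A (en (R - {r}) i) (en (T - {r}) j)"
        using en_remove[OF R, of pR i] en_remove[OF T, of pT j] pR pT c i j by simp
    qed
  qed
  finally have fin: "mdet R T A = (-1) ^ (pR + pT) * mdet (R - {r}) (T - {r}) A" .
  have "R = T \<longrightarrow> pR = pT" unfolding pR_def pT_def by simp
  with fin show ?thesis by blast
qed

lemma mdet_unit_rows: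
  assumes V: "finite V" and R: "finite R" and T: "finite T" and c: "card R = card T"
    and sub: "V \<subseteq> R" "V \<subseteq> T"
    and u: "\<And>v t. v \<in> V \<Longrightarrow> t \<in> T \<Longrightarrow> A v t = (if t = v then 1 else 0)"
  shows "(mdet R T A)\<^sup>2 = (mdet (R - V) (T - V) A)\<^sup>2 \<and> (R = T \<longrightarrow> mdet R T A = mdet (R - V) (T - V) A)"
  using V sub u
proof (induction V rule: finite_induct)
  case empty then show ?case by simp
next
  case (insert v V)
  hence IH: "(mdet R T A)\<^sup>2 = (mdet (R - V) (T - V) A)\<^sup>2 \<and> (R = T \<longrightarrow> mdet R T A = mdet (R - V) (T - V) A)"
    by auto
  have cV: "card (R - V) = card (T - V)"
    using insert R T c by (simp add: card_Diff_subset finite_subset)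
  obtain pR pT where st: "mdet (R - V) (T - V) A = (-1) ^ (pR + pT) * mdet (R - V - {v}) (T - V - {v}) A"
    and eq: "R - V = T - V \<longrightarrow> pR = pT"
    using mdet_unit_row[of "R - V" "T - V" v A] insert R T cV by auto
  have e1: "R - V - {v} = R - insert v V" "T - V - {v} = T - insert v V" by auto
  have sq: "((-1::complex) ^ (pR + pT))\<^sup>2 = 1"
    by (simp add: power_mult_distrib flip: power_mult)
  show ?case
  proof
    show "(mdet R T A)\<^sup>2 = (mdet (R - insert v V) (T - insert v V) A)\<^sup>2"
      using IH st sq unfolding e1 by (simp add: power_mult_distrib)
    show "R = T \<longrightarrow> mdet R T A = mdet (R - insert v V) (T - insert v V) A"
    proof
      assume RT: "R = T"
      hence "pR = pT" using eq by simp
      hence "even (pR + pT)" by simp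
      hence m1: "((-1::complex) ^ (pR + pT)) = 1" by (simp only: neg_one_even_power)
      have "mdet R T A = mdet (R - V) (T - V) A" using IH RT by blast
      also have "\<dots> = mdet (R - insert v V) (T - insert v V) A" using st m1 unfolding e1 by simp
      finally show "mdet R T A = mdet (R - insert v V) (T - insert v V) A" .
    qed
  qed
qed

lemma mdet_transpose:
  "card R = card T \<Longrightarrow> mdet T R (\<lambda>a b. A b a) = mdet R T A"
  unfolding mdet_def using detn_transpose[of "card R" "\<lambda>i j. A (en R i) (en T j)"] by simp

lemma mdet_scale_cols:
  assumes T: "finite T" and c: "card R = card T"
  shows "mdet R T (\<lambda>r t. A r t * f t) = (\<Prod>t\<in>T. f t) * mdet R T A"
proof -
  have "(\<Prod>j<card R. f (en T j)) = (\<Prod>t\<in>T. f t)"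
    unfolding c using prod.reindex_bij_betw[OF en_bij[OF T], of f] by simp
  thus ?thesis unfolding mdet_def using detn_scale_cols[of "card R" "\<lambda>i j. A (en R i) (en T j)" "\<lambda>j. f (en T j)"]
    by simp
qed

lemma mdet_neg: "mdet R T (\<lambda>r t. - A r t) = (-1) ^ card R * mdet R T A"
  unfolding mdet_def by (rule detn_neg)

lemma detn_expand:
  assumes U: "finite U"
  shows "detn m (\<lambda>i j. \<Sum>l\<in>U. x i l * y l j) =
    (\<Sum>f\<in>PiE {..<m} (\<lambda>_. U). (\<Prod>i<m. x i (f i)) * detn m (\<lambda>i j. y (f i) j))"
proof -
  have "detn m (\<lambda>i j. \<Sum>l\<in>U. x i l * y l j) =
    (\<Sum>\<sigma> | \<sigma> permutes {..<m}. \<Sum>f\<in>PiE {..<m} (\<lambda>_. U).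
       of_int (sign \<sigma>) * ((\<Prod>i<m. x i (f i)) * (\<Prod>i<m. y (f i) (\<sigma> i))))"
    unfolding detn_def
  proof (rule sum.cong[OF refl])
    fix \<sigma>
    have "(\<Prod>i<m. \<Sum>l\<in>U. x i l * y l (\<sigma> i)) =
      (\<Sum>f\<in>PiE {..<m} (\<lambda>_. U). \<Prod>i<m. x i (f i) * y (f i) (\<sigma> i))"
      using prod_sum_PiE[of "{..<m}" "\<lambda>_. U" "\<lambda>i l. x i l * y l (\<sigma> i)"] U by simp
    thus "of_int (sign \<sigma>) * (\<Prod>i<m. \<Sum>l\<in>U. x i l * y l (\<sigma> i)) =
      (\<Sum>f\<in>PiE {..<m} (\<lambda>_. U). of_int (sign \<sigma>) * ((\<Prod>i<m. x i (f i)) * (\<Prod>i<m. y (f i) (\<sigma> i))))"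
      by (simp add: sum_distrib_left prod.distrib)
  qed
  also have "\<dots> = (\<Sum>f\<in>PiE {..<m} (\<lambda>_. U). \<Sum>\<sigma> | \<sigma> permutes {..<m}.
       of_int (sign \<sigma>) * ((\<Prod>i<m. x i (f i)) * (\<Prod>i<m. y (f i) (\<sigma> i))))"
    by (rule sum.swap)
  also have "\<dots> = (\<Sum>f\<in>PiE {..<m} (\<lambda>_. U). (\<Prod>i<m. x i (f i)) * detn m (\<lambda>i j. y (f i) j))"
    unfolding detn_def
    by (rule sum.cong[OF refl]) (simp add: sum_distrib_left mult_ac)
  finally show ?thesis .
qed

lemma detn_CB:
  assumes U: "finite U"
  shows "detn m (\<lambda>i j. \<Sum>l\<in>U. x i l * y l j) =
    (\<Sum>S | S \<subseteq> U \<and> card S = m. detn m (\<lambda>i j. x i (en S j)) * detn m (\<lambda>i j. y (en S i) j))"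
proof -
  define P where "P = PiE {..<m} (\<lambda>_. U)"
  define Inj where "Inj = {f \<in> P. inj_on f {..<m}}"
  define h where "h f = (\<Prod>i<m. x i (f i)) * detn m (\<lambda>i j. y (f i) j)" for f
  define SS where "SS = {S. S \<subseteq> U \<and> card S = m}"
  define Perm where "Perm = {\<tau>. \<tau> permutes {..<m}}"
  define g where "g = (\<lambda>(S::nat set, \<tau>::nat \<Rightarrow> nat). (\<lambda>i. if i < m then en S (\<tau> i) else undefined))"
  have finP: "finite P" unfolding P_def using U by (simp add: finite_PiE)
  have finSS: "finite SS" unfolding SS_def using U
    by (rule finite_subset[rotated, OF finite_Pow_iff[THEN iffD2]]) auto
  have finPerm: "finite Perm" unfolding Perm_def by (rule finite_permutations) simp
  have imgeq: "Inj = g ` (SIGMA S:SS. Perm)"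
  proof
    show "g ` (SIGMA S:SS. Perm) \<subseteq> Inj"
    proof
      fix f assume "f \<in> g ` (SIGMA S:SS. Perm)"
      then obtain S \<tau> where S: "S \<subseteq> U" "card S = m" and \<tau>: "\<tau> permutes {..<m}"
        and f: "f = g (S, \<tau>)" unfolding SS_def Perm_def by auto
      have finS: "finite S" using finite_subset[OF S(1) U] .
      have inU: "en S (\<tau> i) \<in> U" if "i < m" for i
      proof -
        have "\<tau> i < m" using permutes_in_image[OF \<tau>] that by simp
        hence "en S (\<tau> i) \<in> S" using en_in[OF finS] S by simp
        thus ?thesis using S by auto
      qed
      have "f \<in> P" unfolding P_def f g_def PiE_iff extensional_def using inU by auto
      moreover have "inj_on f {..<m}"
      proof (rule inj_onI)
        fix i j assume i: "i \<in> {..<m}" and j: "j \<in> {..<m}" and e: "f i = f j"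
        have ti: "\<tau> i < m" "\<tau> j < m" using permutes_in_image[OF \<tau>] i j by auto
        have "en S (\<tau> i) = en S (\<tau> j)" using e i j unfolding f g_def by simp
        hence "\<tau> i = \<tau> j" using en_inj[OF finS] ti S by simp
        thus "i = j" using permutes_inj[OF \<tau>] unfolding inj_def by simp
      qed
      ultimately show "f \<in> Inj" unfolding Inj_def by simp
    qed
  next
    show "Inj \<subseteq> g ` (SIGMA S:SS. Perm)"
    proof
      fix f assume "f \<in> Inj"
      hence fP: "f \<in> P" and fi: "inj_on f {..<m}" unfolding Inj_def by auto
      define S where "S = f ` {..<m}"
      have SU: "S \<subseteq> U" using fP unfolding S_def P_def by auto
      have cS: "card S = m" unfolding S_def using card_image[OF fi] by simp
      have finS: "finite S" unfolding S_def by simp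
      have bf: "bij_betw f {..<m} S" unfolding S_def using fi by (simp add: bij_betw_def)
      have be: "bij_betw (inv_into {..<m} (en S)) S {..<m}"
        using bij_betw_inv_into[OF en_bij[OF finS]] cS by simp
      define \<tau> where "\<tau> i = (if i < m then inv_into {..<m} (en S) (f i) else i)" for i
      have "bij_betw (inv_into {..<m} (en S) \<circ> f) {..<m} {..<m}"
        by (rule bij_betw_trans[OF bf be])
      hence "bij_betw \<tau> {..<m} {..<m}"
        by (rule bij_betw_cong[THEN iffD1, rotated]) (simp add: \<tau>_def)
      hence \<tau>: "\<tau> permutes {..<m}"
        by (rule bij_imp_permutes) (simp add: \<tau>_def)
      have gS: "g (S, \<tau>) = f"
      proof
        fix i
        show "g (S, \<tau>) i = f i"
        proof (cases "i < m")
          case True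
          have fiS: "f i \<in> S" unfolding S_def using True by simp
          have imS: "en S ` {..<m} = S" using en_bij[OF finS] cS by (simp add: bij_betw_def)
          have "f i \<in> en S ` {..<m}" by (simp only: imS fiS)
          hence "en S (inv_into {..<m} (en S) (f i)) = f i" by (rule f_inv_into_f)
          thus ?thesis using True by (simp add: g_def \<tau>_def)
        next
          case False
          have "f i = undefined" using PiE_arb[OF fP[unfolded P_def], of i] False by simp
          thus ?thesis using False unfolding g_def by simp
        qed
      qed
      have mem: "(S, \<tau>) \<in> (SIGMA S:SS. Perm)" using SU cS \<tau> unfolding SS_def Perm_def by simp
      show "f \<in> g ` (SIGMA S:SS. Perm)" by (rule image_eqI[where f=g, OF gS[symmetric] mem])
    qed
  qed
  have injg: "inj_on g (SIGMA S:SS. Perm)"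
  proof (rule inj_onI)
    fix a b assume a: "a \<in> (SIGMA S:SS. Perm)" and b: "b \<in> (SIGMA S:SS. Perm)" and e: "g a = g b"
    obtain S \<tau> where aa: "a = (S, \<tau>)" by (cases a)
    obtain S' \<tau>' where bb: "b = (S', \<tau>')" by (cases b)
    have S: "S \<subseteq> U" "card S = m" and \<tau>: "\<tau> permutes {..<m}" using a unfolding aa SS_def Perm_def by auto
    have S': "S' \<subseteq> U" "card S' = m" and \<tau>': "\<tau>' permutes {..<m}" using b unfolding bb SS_def Perm_def by auto
    have finS: "finite S" "finite S'" using finite_subset[OF S(1) U] finite_subset[OF S'(1) U] by auto
    have img: "g (T, \<rho>) ` {..<m} = T" if "T \<subseteq> U" "card T = m" "\<rho> permutes {..<m}" "finite T" for T \<rho>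
    proof -
      have "g (T, \<rho>) ` {..<m} = (\<lambda>i. en T (\<rho> i)) ` {..<m}"
        by (rule image_cong[OF refl]) (simp add: g_def)
      also have "\<dots> = en T ` (\<rho> ` {..<m})" by (simp only: image_image)
      also have "\<dots> = en T ` {..<m}" using permutes_image[OF that(3)] by simp
      also have "\<dots> = T" using en_bij[OF that(4)] that(2) by (simp add: bij_betw_def)
      finally show ?thesis .
    qed
    have e': "g (S, \<tau>) = g (S', \<tau>')" using e unfolding aa bb .
    have SS': "S = S'"
    proof -
      have "S = g (S, \<tau>) ` {..<m}" by (rule img[OF S \<tau> finS(1), symmetric])
      also have "\<dots> = g (S', \<tau>') ` {..<m}" by (simp only: e')
      also have "\<dots> = S'" by (rule img[OF S' \<tau>' finS(2)])
      finally show ?thesis .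
    qed
    have "\<tau> = \<tau>'"
    proof
      fix i show "\<tau> i = \<tau>' i"
      proof (cases "i < m")
        case True
        have ti: "\<tau> i < m" "\<tau>' i < m" using permutes_in_image[OF \<tau>] permutes_in_image[OF \<tau>'] True by auto
        have "g (S, \<tau>) i = g (S', \<tau>') i" by (simp only: e')
        hence "en S (\<tau> i) = en S (\<tau>' i)" using True SS' unfolding g_def by simp
        thus ?thesis using en_inj[OF finS(1)] ti S by simp
      next
        case False
        thus ?thesis using permutes_not_in[OF \<tau>] permutes_not_in[OF \<tau>'] by simp
      qed
    qed
    thus "a = b" unfolding aa bb using SS' by simp
  qed
  have "detn m (\<lambda>i j. \<Sum>l\<in>U. x i l * y l j) = (\<Sum>f\<in>P. h f)"
    unfolding P_def h_def by (rule detn_expand[OF U])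
  also have "\<dots> = (\<Sum>f\<in>Inj. h f)"
  proof (rule sum.mono_neutral_right[OF finP])
    show "Inj \<subseteq> P" unfolding Inj_def by auto
    show "\<forall>f\<in>P - Inj. h f = 0"
    proof
      fix f assume "f \<in> P - Inj"
      hence "\<not> inj_on f {..<m}" unfolding Inj_def by auto
      then obtain i j where ij: "i < m" "j < m" "i \<noteq> j" "f i = f j"
        unfolding inj_on_def by auto
      have "detn m (\<lambda>i j. y (f i) j) = 0"
        by (rule detn_rows_eq[OF ij(1,2,3)]) (simp add: ij(4))
      thus "h f = 0" unfolding h_def by simp
    qed
  qed
  also have "\<dots> = (\<Sum>p\<in>(SIGMA S:SS. Perm). h (g p))"
    unfolding imgeq using sum.reindex[OF injg, of h] by (simp add: comp_def)
  also have "\<dots> = (\<Sum>S\<in>SS. \<Sum>\<tau>\<in>Perm. h (g (S, \<tau>)))"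
    by (simp add: sum.cartesian_product)
  also have "\<dots> = (\<Sum>S\<in>SS. detn m (\<lambda>i j. x i (en S j)) * detn m (\<lambda>i j. y (en S i) j))"
  proof (rule sum.cong[OF refl])
    fix S assume "S \<in> SS"
    have "(\<Sum>\<tau>\<in>Perm. h (g (S, \<tau>))) =
       (\<Sum>\<tau>\<in>Perm. of_int (sign \<tau>) * (\<Prod>i<m. x i (en S (\<tau> i))) * detn m (\<lambda>i j. y (en S i) j))"
    proof (rule sum.cong[OF refl])
      fix \<tau> assume "\<tau> \<in> Perm"
      hence \<tau>: "\<tau> permutes {..<m}" unfolding Perm_def by simp
      have d1: "detn m (\<lambda>i j. y (g (S, \<tau>) i) j) = detn m (\<lambda>i j. y (en S (\<tau> i)) j)"
        by (rule detn_cong) (simp add: g_def)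
      have p1: "(\<Prod>i<m. x i (g (S, \<tau>) i)) = (\<Prod>i<m. x i (en S (\<tau> i)))"
        by (rule prod.cong) (simp_all add: g_def)
      have e1: "h (g (S, \<tau>)) = (\<Prod>i<m. x i (en S (\<tau> i))) * detn m (\<lambda>i j. y (en S (\<tau> i)) j)"
        unfolding h_def d1 p1 ..
      have e2: "detn m (\<lambda>i j. y (en S (\<tau> i)) j) = of_int (sign \<tau>) * detn m (\<lambda>i j. y (en S i) j)"
        by (rule detn_perm_rows[OF \<tau>])
      from e1 e2 show "h (g (S, \<tau>)) = of_int (sign \<tau>) * (\<Prod>i<m. x i (en S (\<tau> i))) * detn m (\<lambda>i j. y (en S i) j)"
        by (simp add: mult_ac)
    qed
    also have "\<dots> = detn m (\<lambda>i j. x i (en S j)) * detn m (\<lambda>i j. y (en S i) j)"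
      unfolding detn_def Perm_def by (simp add: sum_distrib_right)
    finally show "(\<Sum>\<tau>\<in>Perm. h (g (S, \<tau>))) = detn m (\<lambda>i j. x i (en S j)) * detn m (\<lambda>i j. y (en S i) j)" .
  qed
  finally show ?thesis unfolding SS_def by simp
qed

lemma mdet_CB:
  assumes U: "finite U" and c: "card R = card T"
  shows "mdet R T (\<lambda>r t. \<Sum>l\<in>U. X r l * Y l t) =
    (\<Sum>S | S \<subseteq> U \<and> card S = card R. mdet R S X * mdet S T Y)"
  unfolding mdet_def
  unfolding detn_CB[OF U, of "card R" "\<lambda>i l. X (en R i) l" "\<lambda>l j. Y l (en T j)"]
  by (rule sum.cong) auto

lemma mdet_cong:
  assumes R: "finite R" and T: "finite T" and c: "card R = card T"
    and e: "\<And>r t. r \<in> R \<Longrightarrow> t \<in> T \<Longrightarrow> A r t = B r t"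
  shows "mdet R T A = mdet R T B"
  unfolding mdet_def
  by (rule detn_cong) (use e en_in[OF R] en_in[OF T] c in simp)

lemma dI_mdet: "finite T \<Longrightarrow> dI k b T = mdet {..<k} T b"
  unfolding dI_def mdet_def card_lessThan
  by (rule detn_cong) (simp add: en_lessThan en_def[of T])

lemma minor_sq:
  fixes n k :: nat and I S :: "nat set" and E Pm :: "nat \<Rightarrow> nat \<Rightarrow> complex"
  assumes I: "I \<subseteq> {..<n}" "card I = k"
    and unitE: "\<And>l t. l \<in> I \<Longrightarrow> t \<in> I \<Longrightarrow> E l t = (if t = l then 1 else 0)"
    and brep: "\<And>i t. i < k \<Longrightarrow> t < n \<Longrightarrow> b i t = (\<Sum>l\<in>I. b i l * E l t)"
    and J: "J = {..<n} - I"
    and Pm: "\<And>l i. Pm l i = (if l \<in> I then - E l i else if l = i then 1 else 0)"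
    and S: "S \<subseteq> {..<n}" "card S = card J"
  shows "(dI k b I)\<^sup>2 * (mdet S J Pm)\<^sup>2 = (dI k b ({..<n} - S))\<^sup>2"
proof -
  define T where "T = {..<n} - S"
  have finI: "finite I" using I finite_subset by blast
  have finS: "finite S" using S(1) finite_subset by blast
  have finJ: "finite J" unfolding J by simp
  have finT: "finite T" unfolding T_def by simp
  have kn: "k \<le> n" using card_mono[OF _ I(1)] I(2) by simp
  have cJ: "card J = n - k" unfolding J using I by (simp add: card_Diff_subset finI)
  have cT: "card T = k" unfolding T_def using S cJ kn by (simp add: card_Diff_subset finS)
  have TS: "T \<subseteq> {..<n}" unfolding T_def by auto
  have dT: "dI k b T = dI k b I * mdet I T E"
  proof -
    have "dI k b T = mdet {..<k} T b" by (rule dI_mdet[OF finT])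
    also have "\<dots> = mdet {..<k} T (\<lambda>i t. \<Sum>l\<in>I. b i l * E l t)"
      by (rule mdet_cong) (use cT TS brep finT in auto)
    also have "\<dots> = (\<Sum>S' | S' \<subseteq> I \<and> card S' = card {..<k}. mdet {..<k} S' b * mdet S' T E)"
      by (rule mdet_CB[OF finI]) (simp add: cT)
    also have "{S'. S' \<subseteq> I \<and> card S' = card {..<k}} = {I}"
    proof
      show "{S'. S' \<subseteq> I \<and> card S' = card {..<k}} \<subseteq> {I}"
      proof
        fix S' assume "S' \<in> {S'. S' \<subseteq> I \<and> card S' = card {..<k}}"
        hence "S' \<subseteq> I" "card S' = card I" using I by auto
        hence "S' = I" using card_subset_eq[OF finI] by blast
        thus "S' \<in> {I}" by simp
      qed
      show "{I} \<subseteq> {S'. S' \<subseteq> I \<and> card S' = card {..<k}}" using I by simp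
    qed
    also have "(\<Sum>S'\<in>{I}. mdet {..<k} S' b * mdet S' T E) = dI k b I * mdet I T E"
      by (simp add: dI_mdet[OF finI])
    finally show ?thesis .
  qed
  let ?Et = "\<lambda>a c. E c a"
  have a1: "mdet T I ?Et = mdet I T E" by (rule mdet_transpose) (simp add: cT I)
  have a2: "(mdet T I ?Et)\<^sup>2 = (mdet (T - (T \<inter> I)) (I - (T \<inter> I)) ?Et)\<^sup>2"
    using mdet_unit_rows[of "T \<inter> I" T I ?Et] finT finI cT I unitE by auto
  define V2 where "V2 = S \<inter> J"
  have a3: "(mdet S J Pm)\<^sup>2 = (mdet (S - V2) (J - V2) Pm)\<^sup>2"
    using mdet_unit_rows[of V2 S J Pm] finS finJ S unfolding V2_def
    by (auto simp: Pm J)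
  have cV: "card (S - V2) = card (J - V2)"
    using S finS finJ unfolding V2_def by (simp add: card_Diff_subset)
  have e1: "S - V2 = I - T" unfolding V2_def T_def J using S I by auto
  have e2: "J - V2 = T - I" unfolding V2_def T_def J using S I by auto
  have e3: "T - (T \<inter> I) = T - I" "I - (T \<inter> I) = I - T" by auto
  have cAB: "card (I - T) = card (T - I)" using cV e1 e2 by simp
  have finA: "finite (I - T)" "finite (T - I)" using finI finT by auto
  have a4: "mdet (I - T) (T - I) Pm = mdet (I - T) (T - I) (\<lambda>l i. - E l i)"
    by (rule mdet_cong[OF finA cAB]) (simp add: Pm)
  have a5: "mdet (I - T) (T - I) (\<lambda>l i. - E l i) = (-1) ^ card (I - T) * mdet (I - T) (T - I) E"
    by (rule mdet_neg)
  have a6: "mdet (T - I) (I - T) ?Et = mdet (I - T) (T - I) E"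
    by (rule mdet_transpose[OF cAB])
  have sgn: "((-1::complex) ^ card (I - T))\<^sup>2 = 1"
    by (simp add: power_mult_distrib flip: power_mult)
  have "(mdet S J Pm)\<^sup>2 = (mdet I T E)\<^sup>2"
  proof -
    have "(mdet S J Pm)\<^sup>2 = (mdet (I - T) (T - I) Pm)\<^sup>2" using a3 e1 e2 by simp
    also have "\<dots> = ((-1::complex) ^ card (I - T))\<^sup>2 * (mdet (I - T) (T - I) E)\<^sup>2"
      unfolding a4 a5 by (simp add: power_mult_distrib)
    also have "\<dots> = (mdet (T - I) (I - T) ?Et)\<^sup>2" unfolding sgn a6 by simp
    also have "\<dots> = (mdet T I ?Et)\<^sup>2" using a2 e3 by simp
    also have "\<dots> = (mdet I T E)\<^sup>2" using a1 by simp
    finally show ?thesis .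
  qed
  thus ?thesis unfolding T_def[symmetric] dT by (simp add: power_mult_distrib)
qed

lemma alg_main:
  fixes n k :: nat and I :: "nat set" and E :: "nat \<Rightarrow> nat \<Rightarrow> complex" and w :: "nat \<Rightarrow> complex"
  assumes I: "I \<subseteq> {..<n}" "card I = k"
    and unitE: "\<And>l t. l \<in> I \<Longrightarrow> t \<in> I \<Longrightarrow> E l t = (if t = l then 1 else 0)"
    and brep: "\<And>i t. i < k \<Longrightarrow> t < n \<Longrightarrow> b i t = (\<Sum>l\<in>I. b i l * E l t)"
    and Mdef: "\<And>i j. M i j = (if i \<in> I then (if j = i then 1 else 0) else if j \<in> I then E j i
        else - (\<Sum>l\<in>I. w l * E l i * E l j) - (if i = j then w i else 0))"
  shows "(dI k b I)\<^sup>2 * detn n M = (-1) ^ (n - k) *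
    (\<Sum>S | S \<subseteq> {..<n} \<and> card S = n - k. (dI k b ({..<n} - S))\<^sup>2 * (\<Prod>j\<in>S. w j))"
proof -
  define J where "J = {..<n} - I"
  define Pm where "Pm l i = (if l \<in> I then - E l i else if l = i then 1 else 0)" for l i
  have finI: "finite I" using I finite_subset by blast
  have finJ: "finite J" unfolding J_def by simp
  have cJ: "card J = n - k" unfolding J_def using I by (simp add: card_Diff_subset finI)
  have s1: "detn n M = mdet {..<n} {..<n} M"
    unfolding mdet_def card_lessThan by (rule detn_cong) (simp add: en_lessThan)
  have s2: "mdet {..<n} {..<n} M = mdet J J M"
    using mdet_unit_rows[of I "{..<n}" "{..<n}" M] finI I unfolding J_def by (auto simp: Mdef)
  have s3: "mdet J J M = mdet J J (\<lambda>i j. - (\<Sum>l\<in>{..<n}. (Pm l i * w l) * Pm l j))"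
  proof (rule mdet_cong[OF finJ finJ refl])
    fix i j assume i: "i \<in> J" and j: "j \<in> J"
    have U: "{..<n} = I \<union> J" "I \<inter> J = {}" unfolding J_def using I by auto
    have "(\<Sum>l\<in>{..<n}. (Pm l i * w l) * Pm l j) =
        (\<Sum>l\<in>I. (Pm l i * w l) * Pm l j) + (\<Sum>l\<in>J. (Pm l i * w l) * Pm l j)"
      unfolding U(1) by (rule sum.union_disjoint[OF finI finJ U(2)])
    also have "(\<Sum>l\<in>I. (Pm l i * w l) * Pm l j) = (\<Sum>l\<in>I. w l * E l i * E l j)"
      by (rule sum.cong) (simp_all add: Pm_def)
    also have "(\<Sum>l\<in>J. (Pm l i * w l) * Pm l j) = (\<Sum>l\<in>J. if l = i then (if i = j then w i else 0) else 0)"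
      by (rule sum.cong) (use i j in \<open>auto simp: Pm_def J_def\<close>)
    also have "\<dots> = (if i = j then w i else 0)" using i finJ by simp
    finally have "(\<Sum>l\<in>{..<n}. (Pm l i * w l) * Pm l j) = (\<Sum>l\<in>I. w l * E l i * E l j) + (if i = j then w i else 0)" .
    moreover have "i \<notin> I" "j \<notin> I" using i j unfolding J_def by auto
    ultimately show "M i j = - (\<Sum>l\<in>{..<n}. (Pm l i * w l) * Pm l j)" by (simp add: Mdef)
  qed
  have s4: "mdet J J (\<lambda>i j. - (\<Sum>l\<in>{..<n}. (Pm l i * w l) * Pm l j)) =
      (-1) ^ card J * mdet J J (\<lambda>i j. \<Sum>l\<in>{..<n}. (Pm l i * w l) * Pm l j)"
    by (rule mdet_neg)
  have s5: "mdet J J (\<lambda>i j. \<Sum>l\<in>{..<n}. (Pm l i * w l) * Pm l j) =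
      (\<Sum>S | S \<subseteq> {..<n} \<and> card S = card J. mdet J S (\<lambda>i l. Pm l i * w l) * mdet S J Pm)"
    by (rule mdet_CB) simp_all
  have s6: "mdet J S (\<lambda>i l. Pm l i * w l) = (\<Prod>j\<in>S. w j) * mdet S J Pm"
    if "S \<subseteq> {..<n}" "card S = card J" for S
  proof -
    have finS: "finite S" using that finite_subset by blast
    have "mdet J S (\<lambda>i l. Pm l i * w l) = (\<Prod>j\<in>S. w j) * mdet J S (\<lambda>i l. Pm l i)"
      by (rule mdet_scale_cols[OF finS]) (use that in simp)
    also have "mdet J S (\<lambda>i l. Pm l i) = mdet S J Pm" by (rule mdet_transpose) (use that in simp)
    finally show ?thesis .
  qed
  have s7: "(dI k b I)\<^sup>2 * (mdet S J Pm)\<^sup>2 = (dI k b ({..<n} - S))\<^sup>2"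
    if "S \<subseteq> {..<n}" "card S = card J" for S
    by (rule minor_sq[OF I unitE brep J_def Pm_def that]) simp_all
  have "(dI k b I)\<^sup>2 * detn n M = (dI k b I)\<^sup>2 * ((-1) ^ card J *
      (\<Sum>S | S \<subseteq> {..<n} \<and> card S = card J. mdet J S (\<lambda>i l. Pm l i * w l) * mdet S J Pm))"
    using s1 s2 s3 s4 s5 by simp
  also have "\<dots> = (-1) ^ card J *
      (\<Sum>S | S \<subseteq> {..<n} \<and> card S = card J. (dI k b I)\<^sup>2 * (mdet J S (\<lambda>i l. Pm l i * w l) * mdet S J Pm))"
    by (simp add: sum_distrib_left mult_ac)
  also have "(\<Sum>S | S \<subseteq> {..<n} \<and> card S = card J. (dI k b I)\<^sup>2 * (mdet J S (\<lambda>i l. Pm l i * w l) * mdet S J Pm))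
      = (\<Sum>S | S \<subseteq> {..<n} \<and> card S = card J. (dI k b ({..<n} - S))\<^sup>2 * (\<Prod>j\<in>S. w j))"
  proof (rule sum.cong[OF refl])
    fix S assume "S \<in> {S. S \<subseteq> {..<n} \<and> card S = card J}"
    hence S: "S \<subseteq> {..<n}" "card S = card J" by auto
    have "(dI k b I)\<^sup>2 * (mdet J S (\<lambda>i l. Pm l i * w l) * mdet S J Pm) =
       (\<Prod>j\<in>S. w j) * ((dI k b I)\<^sup>2 * (mdet S J Pm)\<^sup>2)"
      unfolding s6[OF S] by (simp add: power2_eq_square mult_ac)
    also have "\<dots> = (dI k b ({..<n} - S))\<^sup>2 * (\<Prod>j\<in>S. w j)" unfolding s7[OF S] by simp
    finally show "(dI k b I)\<^sup>2 * (mdet J S (\<lambda>i l. Pm l i * w l) * mdet S J Pm) = (dI k b ({..<n} - S))\<^sup>2 * (\<Prod>j\<in>S. w j)" .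
  qed
  finally show ?thesis unfolding cJ .
qed

lemma Ysp_lin:
  assumes A: "finite A" and v: "\<forall>l\<in>A. v l \<in> Ysp n k b"
  shows "(\<lambda>j. \<Sum>l\<in>A. c l * v l j) \<in> Ysp n k b"
proof -
  have "\<forall>l\<in>A. \<exists>cc. v l = (\<lambda>j. \<Sum>i<k. cc i * b i j)" using v unfolding Ysp_def by simp
  then obtain cc where cc: "\<And>l. l \<in> A \<Longrightarrow> v l = (\<lambda>j. \<Sum>i<k. cc l i * b i j)"
    by metis
  have "(\<lambda>j. \<Sum>l\<in>A. c l * v l j) = (\<lambda>j. \<Sum>i<k. (\<Sum>l\<in>A. c l * cc l i) * b i j)"
  proof
    fix j
    have "(\<Sum>l\<in>A. c l * v l j) = (\<Sum>l\<in>A. \<Sum>i<k. c l * (cc l i * b i j))"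
      by (rule sum.cong) (simp_all add: cc sum_distrib_left)
    also have "\<dots> = (\<Sum>i<k. \<Sum>l\<in>A. c l * (cc l i * b i j))" by (rule sum.swap)
    also have "\<dots> = (\<Sum>i<k. (\<Sum>l\<in>A. c l * cc l i) * b i j)"
      by (rule sum.cong[OF refl]) (simp add: sum_distrib_left sum_distrib_right mult_ac)
    finally show "(\<Sum>l\<in>A. c l * v l j) = (\<Sum>i<k. (\<Sum>l\<in>A. c l * cc l i) * b i j)" .
  qed
  thus ?thesis unfolding Ysp_def mem_Collect_eq by (rule exI[where x="\<lambda>i. \<Sum>l\<in>A. c l * cc l i"])
qed

lemma Ysp_b:
  assumes "i < k" shows "b i \<in> Ysp n k b"
proof -
  have "b i = (\<lambda>j. \<Sum>i'<k. (if i' = i then 1 else 0) * b i' j)"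
  proof
    fix j
    have "(\<Sum>i'<k. (if i' = i then 1 else 0) * b i' j) = (\<Sum>i'<k. if i' = i then b i' j else 0)"
      by (rule sum.cong) auto
    also have "\<dots> = b i j" using assms by simp
    finally show "b i j = (\<Sum>i'<k. (if i' = i then 1 else 0) * b i' j)" by simp
  qed
  thus ?thesis unfolding Ysp_def mem_Collect_eq by (rule exI[where x="\<lambda>i'. if i' = i then 1 else 0"])
qed

lemma Ysp_cvec: "\<forall>i<k. b i \<in> cvec n \<Longrightarrow> y \<in> Ysp n k b \<Longrightarrow> y \<in> cvec n"
  unfolding Ysp_def cvec_def by auto

lemma affine_ev:
  fixes p d u :: complex
  assumes "p \<noteq> 0"
  shows "eventually (\<lambda>t. p + (t - u) * d \<noteq> 0) (nhds u)"
proof -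
  have "((\<lambda>t. p + (t - u) * d) \<longlongrightarrow> p + (u - u) * d) (nhds u)"
    by (intro tendsto_intros filterlim_ident)
  hence "((\<lambda>t. p + (t - u) * d) \<longlongrightarrow> p) (nhds u)" by simp
  thus ?thesis using tendsto_imp_eventually_ne assms by blast
qed

lemma deriv_H:
  fixes u :: complex
  assumes I: "finite I" and p: "\<And>l. l \<in> I \<Longrightarrow> p l \<noteq> 0" and pi: "p i \<noteq> 0"
  shows "((\<lambda>t. (\<Sum>l\<in>I. (x l + (t - u) * dl l - a l / (p l + (t - u) * pd l)) * E l i)
            + a i / (p i + (t - u) * pd i)) has_field_derivative
          ((\<Sum>l\<in>I. (dl l + a l * pd l / (p l)\<^sup>2) * E l i) - a i * pd i / (p i)\<^sup>2)) (at u)"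
proof -
  have d1: "((\<lambda>t. (x l + (t - u) * dl l - a l / (p l + (t - u) * pd l)) * E l i) has_field_derivative
      ((dl l + a l * pd l / (p l)\<^sup>2) * E l i)) (at u)" if "l \<in> I" for l
    using p[OF that] by (auto intro!: derivative_eq_intros simp: field_simps power2_eq_square)
  have d2: "((\<lambda>t. a i / (p i + (t - u) * pd i)) has_field_derivative (- (a i * pd i / (p i)\<^sup>2))) (at u)"
    using pi by (auto intro!: derivative_eq_intros simp: field_simps power2_eq_square)
  show ?thesis
    using DERIV_add[OF DERIV_sum[OF d1] d2] by simp
qed

theorem theorem4p4:
  fixes n k :: nat and b :: "nat \<Rightarrow> nat \<Rightarrow> complex" and a :: "nat \<Rightarrow> complex"
  assumes b_vec: "\<forall>i<k. b i \<in> cvec n"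
    and b_indep: "lin_indep k b"
    and a_nz: "\<forall>j<n. a j \<noteq> 0"
    and Y_nondeg: "\<forall>j<n. \<exists>y\<in>Ysp n k b. y j \<noteq> 0"
    and Yperp_nondeg: "\<forall>j<n. \<exists>p\<in>annih n (Ysp n k b). p j \<noteq> 0"
  shows "\<forall>I. I \<subseteq> {..<n} \<and> card I = k \<and> coord_sys I (Ysp n k b) \<longrightarrow>
           (\<forall>z \<in> Lset n (Ysp n k b) a.
              (dI k b I)\<^sup>2 * Jac n (Ysp n k b) a I z =
              (-1) ^ (n - k) *
              (\<Sum>M | M \<subseteq> {..<n} \<and> card M = n - k.
                 (dI k b ({..<n} - M))\<^sup>2 * (\<Prod>j\<in>M. a j / (snd z j)\<^sup>2)))"
proof (intro allI impI ballI)
  fix I z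
  assume H: "I \<subseteq> {..<n} \<and> card I = k \<and> coord_sys I (Ysp n k b)"
    and zL0: "z \<in> Lset n (Ysp n k b) a"
  define Y where "Y = Ysp n k b"
  define L where "L = Lset n Y a"
  have I: "I \<subseteq> {..<n}" "card I = k" using H by auto
  have cs: "coord_sys I Y" using H unfolding Y_def by simp
  have zL: "z \<in> L" using zL0 unfolding L_def Y_def .
  define J where "J = {..<n} - I"
  have finI: "finite I" using I(1) finite_subset by blast
  have finJ: "finite J" unfolding J_def by simp
  have IJ: "{..<n} = I \<union> J" "I \<inter> J = {}" unfolding J_def using I by auto
  define restr where "restr = (\<lambda>y::nat\<Rightarrow>complex. \<lambda>j. if j \<in> I then y j else 0)"
  have bij: "bij_betw restr Y {v. \<forall>j. j \<notin> I \<longrightarrow> v j = 0}"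
    using cs unfolding coord_sys_def restr_def .
  have injr: "inj_on restr Y" using bij by (simp add: bij_betw_def)
  define E where "E l = inv_into Y restr (\<lambda>j. if j = l then 1 else 0)" for l
  have Eimg: "(\<lambda>j. if j = l then (1::complex) else 0) \<in> restr ` Y" if "l \<in> I" for l
  proof -
    have "restr ` Y = {v. \<forall>j. j \<notin> I \<longrightarrow> v j = 0}" using bij by (simp add: bij_betw_def)
    thus ?thesis using that by auto
  qed
  have EY: "E l \<in> Y" if "l \<in> I" for l
    unfolding E_def by (rule inv_into_into[OF Eimg[OF that]])
  have Er: "restr (E l) = (\<lambda>j. if j = l then 1 else 0)" if "l \<in> I" for l
    unfolding E_def by (rule f_inv_into_f[OF Eimg[OF that]])
  have unitE: "E l t = (if t = l then 1 else 0)" if "l \<in> I" "t \<in> I" for l t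
  proof -
    have "restr (E l) t = E l t" using that(2) unfolding restr_def by simp
    thus ?thesis using Er[OF that(1)] by simp
  qed
  have Ylin: "(\<lambda>j. \<Sum>l\<in>I. c l * E l j) \<in> Y" for c
    unfolding Y_def by (rule Ysp_lin[OF finI]) (use EY in \<open>simp add: Y_def\<close>)
  have sumI_delta: "(\<Sum>l\<in>I. f l * E l j) = f j" if "j \<in> I" for f j
  proof -
    have "(\<Sum>l\<in>I. f l * E l j) = (\<Sum>l\<in>I. if l = j then f l else 0)"
      by (rule sum.cong[OF refl]) (use unitE that in auto)
    also have "\<dots> = f j" using that finI by simp
    finally show ?thesis .
  qed
  have Yrep: "y = (\<lambda>j. \<Sum>l\<in>I. y l * E l j)" if "y \<in> Y" for y
  proof (rule inj_onD[OF injr _ that Ylin])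
    show "restr y = restr (\<lambda>j. \<Sum>l\<in>I. y l * E l j)"
      unfolding restr_def using sumI_delta by auto
  qed
  have brep: "b i t = (\<Sum>l\<in>I. b i l * E l t)" if "i < k" "t < n" for i t
  proof -
    have "b i \<in> Y" unfolding Y_def by (rule Ysp_b[OF that(1)])
    hence e: "b i = (\<lambda>j. \<Sum>l\<in>I. b i l * E l j)" by (rule Yrep)
    from fun_cong[OF e, of t] show ?thesis by simp
  qed
  have Ycv: "y \<in> cvec n" if "y \<in> Y" for y
    using Ysp_cvec[OF b_vec, of y] that unfolding Y_def by simp
  have dotE: "(\<Sum>j<n. p j * E l j) = p l + (\<Sum>m\<in>J. E l m * p m)" if "l \<in> I" for p l
  proof -
    have "(\<Sum>j<n. p j * E l j) = (\<Sum>j\<in>I. p j * E l j) + (\<Sum>j\<in>J. p j * E l j)"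
      unfolding IJ(1) by (rule sum.union_disjoint[OF finI finJ IJ(2)])
    also have "(\<Sum>j\<in>I. p j * E l j) = p l"
    proof -
      have "(\<Sum>j\<in>I. p j * E l j) = (\<Sum>j\<in>I. if j = l then p j else 0)"
        by (rule sum.cong[OF refl]) (use unitE that in auto)
      also have "\<dots> = p l" using that finI by simp
      finally show ?thesis .
    qed
    finally show ?thesis by (simp add: mult.commute)
  qed
  have annih_iff: "p \<in> annih n Y \<longleftrightarrow> (\<forall>l\<in>I. p l = - (\<Sum>m\<in>J. E l m * p m))" if "p \<in> cvec n" for p
  proof
    assume "p \<in> annih n Y"
    hence A: "\<forall>y\<in>Y. (\<Sum>j<n. p j * y j) = 0" unfolding annih_def by simp
    show "\<forall>l\<in>I. p l = - (\<Sum>m\<in>J. E l m * p m)"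
    proof
      fix l assume l: "l \<in> I"
      have "(\<Sum>j<n. p j * E l j) = 0" using bspec[OF A EY[OF l]] .
      thus "p l = - (\<Sum>m\<in>J. E l m * p m)" using dotE[OF l, of p] by (simp add: eq_neg_iff_add_eq_0)
    qed
  next
    assume A: "\<forall>l\<in>I. p l = - (\<Sum>m\<in>J. E l m * p m)"
    have "(\<Sum>j<n. p j * y j) = 0" if y: "y \<in> Y" for y
    proof -
      have "(\<Sum>j<n. p j * y j) = (\<Sum>j<n. p j * (\<Sum>l\<in>I. y l * E l j))"
        by (subst Yrep[OF y]) simp
      also have "\<dots> = (\<Sum>j<n. \<Sum>l\<in>I. y l * (p j * E l j))"
        by (simp add: sum_distrib_left mult_ac)
      also have "\<dots> = (\<Sum>l\<in>I. \<Sum>j<n. y l * (p j * E l j))" by (rule sum.swap)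
      also have "\<dots> = (\<Sum>l\<in>I. y l * (\<Sum>j<n. p j * E l j))" by (simp add: sum_distrib_left)
      also have "\<dots> = 0"
        by (rule sum.neutral) (use A dotE in simp)
      finally show ?thesis .
    qed
    thus "p \<in> annih n Y" unfolding annih_def using that by simp
  qed
  define Pf where "Pf x l = (if l \<in> J then x l else if l \<in> I then - (\<Sum>m\<in>J. E l m * x m) else 0)"
    for x :: "nat \<Rightarrow> complex" and l
  define Yf where "Yf x = (\<lambda>j. \<Sum>l\<in>I. (x l - a l / Pf x l) * E l j)" for x
  define Zf where "Zf x = r_map a (Yf x, Pf x)" for x
  have Lelim: "\<exists>y p. z' = r_map a (y, p) \<and> y \<in> Y \<and> p \<in> annih n Y \<and> (\<forall>j<n. p j \<noteq> 0)" if "z' \<in> L" for z'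
    using that unfolding L_def Lset_def by auto
  have C1: "Pf (chart I z') = snd z' \<and> Zf (chart I z') = z'" if zz: "z' \<in> L" for z'
  proof -
    obtain y p where z': "z' = r_map a (y, p)" and y: "y \<in> Y" and p: "p \<in> annih n Y"
      and pnz: "\<forall>j<n. p j \<noteq> 0" using Lelim[OF zz] by auto
    have pc: "p \<in> cvec n" using p unfolding annih_def by simp
    have pI: "\<forall>l\<in>I. p l = - (\<Sum>m\<in>J. E l m * p m)" using annih_iff[OF pc] p by simp
    define x where "x = chart I z'"
    have xJ: "x m = p m" if "m \<in> J" for m
      using that unfolding x_def chart_def z' r_map_def J_def by simp
    have Px: "Pf x = p"
    proof
      fix l
      show "Pf x l = p l"
      proof (cases "l \<in> J")
        case True thus ?thesis using xJ unfolding Pf_def by simp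
      next
        case False
        show ?thesis
        proof (cases "l \<in> I")
          case True
          have "(\<Sum>m\<in>J. E l m * x m) = (\<Sum>m\<in>J. E l m * p m)" by (rule sum.cong) (simp_all add: xJ)
          thus ?thesis using pI True False unfolding Pf_def by simp
        next
          case F2: False
          hence "n \<le> l" using False unfolding J_def by auto
          hence "p l = 0" using pc unfolding cvec_def by simp
          thus ?thesis using False F2 unfolding Pf_def by simp
        qed
      qed
    qed
    have Yx: "Yf x = y"
    proof -
      have "Yf x = (\<lambda>j. \<Sum>l\<in>I. y l * E l j)"
        unfolding Yf_def Px
      proof (intro ext sum.cong refl)
        fix j l assume l: "l \<in> I"
        have "x l = y l + a l / p l" using l unfolding x_def chart_def z' r_map_def by simp
        thus "(x l - a l / p l) * E l j = y l * E l j" by simp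
      qed
      also have "\<dots> = y" using Yrep[OF y] by simp
      finally show ?thesis .
    qed
    have "Zf x = z'" unfolding Zf_def Yx Px z' ..
    thus ?thesis using Px unfolding x_def z' by (simp add: r_map_def)
  qed
  have C2: "Zf x \<in> L \<and> chart I (Zf x) = x"
    if xn: "\<forall>j. n \<le> j \<longrightarrow> x j = 0" and nz: "\<forall>l<n. Pf x l \<noteq> 0" for x
  proof -
    have Pc: "Pf x \<in> cvec n" unfolding cvec_def Pf_def J_def using I by auto
    have Pa: "Pf x \<in> annih n Y"
    proof (subst annih_iff[OF Pc], intro ballI)
      fix l assume l: "l \<in> I"
      have "l \<notin> J" using l unfolding J_def by simp
      hence "Pf x l = - (\<Sum>m\<in>J. E l m * x m)" using l unfolding Pf_def by simp
      also have "(\<Sum>m\<in>J. E l m * x m) = (\<Sum>m\<in>J. E l m * Pf x m)"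
        by (rule sum.cong) (simp_all add: Pf_def)
      finally show "Pf x l = - (\<Sum>m\<in>J. E l m * Pf x m)" .
    qed
    have YY: "Yf x \<in> Y" unfolding Yf_def by (rule Ylin)
    have inL: "Zf x \<in> L" unfolding Zf_def L_def Lset_def using YY Pa nz by auto
    have "chart I (Zf x) = x"
    proof
      fix j
      show "chart I (Zf x) j = x j"
      proof (cases "j \<in> I")
        case True
        have "Yf x j = x j - a j / Pf x j" unfolding Yf_def by (rule sumI_delta[OF True])
        thus ?thesis using True unfolding chart_def Zf_def r_map_def by simp
      next
        case False
        show ?thesis
        proof (cases "j \<in> J")
          case True thus ?thesis using False unfolding chart_def Zf_def r_map_def Pf_def by simp
        next
          case F2: False
          hence "n \<le> j" using False unfolding J_def by auto
          thus ?thesis using False F2 xn unfolding chart_def Zf_def r_map_def Pf_def by simp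
        qed
      qed
    qed
    with inL show ?thesis by simp
  qed
  have C3: "inj_on (chart I) L"
  proof (rule inj_onI)
    fix z1 z2 assume "z1 \<in> L" "z2 \<in> L" "chart I z1 = chart I z2"
    hence "Zf (chart I z1) = Zf (chart I z2)" by simp
    thus "z1 = z2" using C1[OF \<open>z1 \<in> L\<close>] C1[OF \<open>z2 \<in> L\<close>] by simp
  qed
  define x where "x = chart I z"
  define p where "p = snd z"
  obtain y0 p0 where z0: "z = r_map a (y0, p0)" and y0: "y0 \<in> Y" and p0: "p0 \<in> annih n Y"
    and p0nz: "\<forall>j<n. p0 j \<noteq> 0" using Lelim[OF zL] by auto
  have pp0: "p = p0" unfolding p_def z0 r_map_def by simp
  have pnz: "p l \<noteq> 0" if "l < n" for l using p0nz that pp0 by simp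
  have pc: "p \<in> cvec n" using p0 pp0 unfolding annih_def by simp
  have Px: "Pf x = p" using C1[OF zL] unfolding x_def p_def by simp
  have xn: "x j = 0" if "n \<le> j" for j
  proof -
    have "j \<notin> I" using that I by auto
    thus ?thesis using pc that unfolding x_def chart_def p_def[symmetric] cvec_def by simp
  qed
  define dl where "dl j0 l = (if l = j0 then (1::complex) else 0)" for j0 l :: nat
  define Pd where "Pd j0 l = (if l \<in> J then (if l = j0 then 1 else 0)
      else if l \<in> I then (if j0 \<in> J then - E l j0 else 0) else 0)" for j0 l :: nat
  define Dv where "Dv i j0 = (\<Sum>l\<in>I. (dl j0 l + a l * Pd j0 l / (p l)\<^sup>2) * E l i) - a i * Pd j0 i / (p i)\<^sup>2"
    for i j0
  have aff1: "(x(j0 := t)) l = x l + (t - x j0) * dl j0 l" for j0 l t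
    unfolding dl_def by auto
  have aff2: "Pf (x(j0 := t)) l = p l + (t - x j0) * Pd j0 l" for j0 l t
  proof (cases "l \<in> J")
    case True
    thus ?thesis using Px aff1[of j0 t l] unfolding Pd_def dl_def by (auto simp: Pf_def)
  next
    case False
    show ?thesis
    proof (cases "l \<in> I")
      case True
      have "(\<Sum>m\<in>J. E l m * (x(j0 := t)) m) = (\<Sum>m\<in>J. E l m * x m + (t - x j0) * (E l m * dl j0 m))"
        by (rule sum.cong[OF refl]) (simp add: dl_def algebra_simps)
      also have "\<dots> = (\<Sum>m\<in>J. E l m * x m) + (t - x j0) * (\<Sum>m\<in>J. E l m * dl j0 m)"
        by (simp add: sum.distrib sum_distrib_left)
      also have "(\<Sum>m\<in>J. E l m * dl j0 m) = (if j0 \<in> J then E l j0 else 0)"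
      proof -
        have "(\<Sum>m\<in>J. E l m * dl j0 m) = (\<Sum>m\<in>J. if m = j0 then E l m else 0)"
          by (rule sum.cong[OF refl]) (simp add: dl_def)
        also have "\<dots> = (if j0 \<in> J then E l j0 else 0)" using finJ by (simp add: sum.delta')
        finally show ?thesis .
      qed
      finally have s: "(\<Sum>m\<in>J. E l m * (x(j0 := t)) m) = (\<Sum>m\<in>J. E l m * x m) + (t - x j0) * (if j0 \<in> J then E l j0 else 0)" .
      have "Pf x l = p l" using Px by simp
      hence pl: "p l = - (\<Sum>m\<in>J. E l m * x m)" using True False by (simp add: Pf_def)
      have "Pf (x(j0 := t)) l = - (\<Sum>m\<in>J. E l m * (x(j0 := t)) m)"
        unfolding Pf_def using True False by (simp del: fun_upd_apply)
      also have "\<dots> = p l + (t - x j0) * Pd j0 l"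
        unfolding s pl Pd_def using True False by (simp add: algebra_simps)
      finally show ?thesis .
    next
      case F2: False
      hence "n \<le> l" using False unfolding J_def by auto
      hence "p l = 0" using pc unfolding cvec_def by simp
      thus ?thesis using False F2 unfolding Pf_def Pd_def by simp
    qed
  qed
  have Jder: "deriv (\<lambda>t. fst (inv_into L (chart I) (x(j0 := t))) i) (x j0) = Dv i j0"
    if i: "i < n" and j0: "j0 < n" for i j0
  proof -
    have ev: "eventually (\<lambda>t. \<forall>l\<in>{..<n}. Pf (x(j0 := t)) l \<noteq> 0) (nhds (x j0))"
    proof (rule eventually_ball_finite, simp, intro ballI)
      fix l assume "l \<in> {..<n}"
      hence "p l \<noteq> 0" using pnz by simp
      thus "eventually (\<lambda>t. Pf (x(j0 := t)) l \<noteq> 0) (nhds (x j0))"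
        unfolding aff2 by (rule affine_ev)
    qed
    have ev2: "eventually (\<lambda>t. fst (inv_into L (chart I) (x(j0 := t))) i = fst (Zf (x(j0 := t))) i) (nhds (x j0))"
    proof (rule eventually_mono[OF ev])
      fix t assume nz: "\<forall>l\<in>{..<n}. Pf (x(j0 := t)) l \<noteq> 0"
      have xn': "\<forall>j. n \<le> j \<longrightarrow> (x(j0 := t)) j = 0" using xn j0 by auto
      have c2: "Zf (x(j0 := t)) \<in> L \<and> chart I (Zf (x(j0 := t))) = x(j0 := t)"
        by (rule C2) (use xn' nz in auto)
      have "inv_into L (chart I) (x(j0 := t)) = Zf (x(j0 := t))"
        by (rule inv_into_f_eq[OF C3]) (use c2 in auto)
      thus "fst (inv_into L (chart I) (x(j0 := t))) i = fst (Zf (x(j0 := t))) i" by simp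
    qed
    have Hform: "(\<lambda>t. fst (Zf (x(j0 := t))) i) = (\<lambda>t. (\<Sum>l\<in>I. (x l + (t - x j0) * dl j0 l - a l / (p l + (t - x j0) * Pd j0 l)) * E l i)
            + a i / (p i + (t - x j0) * Pd j0 i))"
    proof
      fix t
      have "(\<Sum>l\<in>I. ((x(j0 := t)) l - a l / Pf (x(j0 := t)) l) * E l i) =
          (\<Sum>l\<in>I. (x l + (t - x j0) * dl j0 l - a l / (p l + (t - x j0) * Pd j0 l)) * E l i)"
        by (rule sum.cong[OF refl]) (simp only: aff1 aff2)
      thus "fst (Zf (x(j0 := t))) i = (\<Sum>l\<in>I. (x l + (t - x j0) * dl j0 l - a l / (p l + (t - x j0) * Pd j0 l)) * E l i)
            + a i / (p i + (t - x j0) * Pd j0 i)"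
        unfolding Zf_def r_map_def Yf_def by (simp only: fst_conv snd_conv aff2)
    qed
    have "deriv (\<lambda>t. fst (inv_into L (chart I) (x(j0 := t))) i) (x j0) = deriv (\<lambda>t. fst (Zf (x(j0 := t))) i) (x j0)"
      by (rule deriv_cong_ev[OF ev2 refl])
    also have "\<dots> = Dv i j0" unfolding Hform Dv_def
      by (rule DERIV_imp_deriv, rule deriv_H[OF finI]) (use pnz I i in auto)
    finally show ?thesis .
  qed
  have JacD: "Jac n Y a I z = detn n Dv"
    unfolding Jac_def Let_def L_def[symmetric] x_def[symmetric]
    by (rule detn_cong) (simp add: Jder)
  define w where "w l = a l / (p l)\<^sup>2" for l
  define M where "M i j = (if i \<in> I then (if j = i then 1 else 0) else if j \<in> I then E j i
        else - (\<Sum>l\<in>I. w l * E l i * E l j) - (if i = j then w i else 0))" for i j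
  have DM: "detn n Dv = detn n M"
  proof (rule detn_cong)
    fix i j assume i: "i < n" and j: "j < n"
    show "Dv i j = M i j"
    proof (cases "i \<in> I")
      case True
      have "Dv i j = (dl j i + a i * Pd j i / (p i)\<^sup>2) - a i * Pd j i / (p i)\<^sup>2"
        unfolding Dv_def by (subst sumI_delta[OF True]) simp
      thus ?thesis using True unfolding M_def dl_def by simp
    next
      case False
      hence iJ: "i \<in> J" using i unfolding J_def by simp
      show ?thesis
      proof (cases "j \<in> I")
        case True
        have jJ: "j \<notin> J" using True unfolding J_def by simp
        have "Dv i j = (\<Sum>l\<in>I. dl j l * E l i)"
          unfolding Dv_def Pd_def using iJ jJ False True by (auto intro!: sum.cong)
        also have "\<dots> = (\<Sum>l\<in>I. if l = j then E l i else 0)"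
          by (rule sum.cong[OF refl]) (simp add: dl_def)
        also have "\<dots> = E j i" using True finI by simp
        finally show ?thesis using False True unfolding M_def by simp
      next
        case F2: False
        hence jJ: "j \<in> J" using j unfolding J_def by simp
        have "Dv i j = (\<Sum>l\<in>I. (a l * (- E l j) / (p l)\<^sup>2) * E l i) - a i * (if i = j then 1 else 0) / (p i)\<^sup>2"
          unfolding Dv_def Pd_def dl_def using iJ jJ False F2 
          by (auto intro!: sum.cong simp: J_def)
        also have "\<dots> = - (\<Sum>l\<in>I. w l * E l i * E l j) - (if i = j then w i else 0)"
          unfolding w_def by (simp add: sum_negf[symmetric] field_simps)
        finally show ?thesis using False F2 unfolding M_def by simp
      qed
    qed
  qed
  have main: "(dI k b I)\<^sup>2 * detn n M = (-1) ^ (n - k) *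
    (\<Sum>S | S \<subseteq> {..<n} \<and> card S = n - k. (dI k b ({..<n} - S))\<^sup>2 * (\<Prod>j\<in>S. w j))"
    by (rule alg_main[OF I unitE brep]) (simp_all add: M_def)
  show "(dI k b I)\<^sup>2 * Jac n (Ysp n k b) a I z = (-1) ^ (n - k) *
      (\<Sum>M | M \<subseteq> {..<n} \<and> card M = n - k. (dI k b ({..<n} - M))\<^sup>2 * (\<Prod>j\<in>M. a j / (snd z j)\<^sup>2))"
    using main unfolding Y_def[symmetric] JacD DM w_def p_def .
qed

end
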